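(* For all $U,V\in\mathcal{U}(d)$, $|H_2(U)-H_2(V)|\le\frac{4\pi}{\sqrt d}\|U-V\|_F$; that is, $H_2$ is Lipschitz on $\mathcal{U}(d)$ with respect to the Hilbert–Schmidt norm with Lipschitz constant at most $4\pi/\sqrt d$.
   Context: On $\mathbb{C}^{d_L}$ let $Z|k\rangle=\omega^k|k\rangle$, $X|k\rangle=|k+1\rangle$ (mod $d_L$), $\omega=e^{2\pi i/d_L}$, $\tau=-e^{i\pi/d_L}$, $D_{(a_1,a_2)}=\tau^{a_1a_2}X^{a_1}Z^{a_2}$, and for $\mathbf a=\mathbf a_1\oplus\cdots\oplus\mathbf a_n\in\mathbb{Z}_{d_L}^{2n}$ let $D_{\mathbf a}=D_{\mathbf a_1}\otimes\cdots\otimes D_{\mathbf a_n}$ acting on $\mathbb{C}^d$, $d=d_L^n$. The 2-Clifford entropy of a unitary $U$ is $H_2(U)=1-\frac{1}{d^6}\sum_{\mathbf a,\mathbf b}\big|\operatorname{tr}(D_{\mathbf a}^\dagger UD_{\mathbf b}U^\dagger)\big|^4$. $\|A\|_F=\sqrt{\operatorname{tr}(A^\dagger A)}$. *)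

theory Defs
  imports Complex_Main "Jordan_Normal_Form.Matrix"
begin

text \<open>Qudit dimension dL, number of qudits n, total dimension d = dL^n.\<close>

definition omega :: "nat \<Rightarrow> complex" where
  "omega dL = cis (2 * pi / real dL)"

definition tau :: "nat \<Rightarrow> complex" where
  "tau dL = - cis (pi / real dL)"

definition Zmat :: "nat \<Rightarrow> complex mat" where
  "Zmat dL = mat dL dL (\<lambda>(i,j). if i = j then omega dL ^ j else 0)"

definition Xmat :: "nat \<Rightarrow> complex mat" where
  "Xmat dL = mat dL dL (\<lambda>(i,j). if i = (j + 1) mod dL then 1 else 0)"

definition Dq :: "nat \<Rightarrow> nat \<times> nat \<Rightarrow> complex mat" where
  "Dq dL a = tau dL ^ (fst a * snd a) \<cdot>\<^sub>m (Xmat dL ^\<^sub>m fst a * Zmat dL ^\<^sub>m snd a)"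

definition kron :: "complex mat \<Rightarrow> complex mat \<Rightarrow> complex mat" where
  "kron A B = mat (dim_row A * dim_row B) (dim_col A * dim_col B)
     (\<lambda>(i,j). A $$ (i div dim_row B, j div dim_col B) * B $$ (i mod dim_row B, j mod dim_col B))"

fun Dn :: "nat \<Rightarrow> (nat \<times> nat) list \<Rightarrow> complex mat" where
  "Dn dL [] = 1\<^sub>m 1"
| "Dn dL (p # ps) = kron (Dq dL p) (Dn dL ps)"

text \<open>Index set Z_dL^{2n}, represented as lists of n pairs with entries < dL.\<close>
definition Idx :: "nat \<Rightarrow> nat \<Rightarrow> (nat \<times> nat) list set" where
  "Idx dL n = {a. length a = n \<and> (\<forall>p \<in> set a. fst p < dL \<and> snd p < dL)}"

definition mtrace :: "complex mat \<Rightarrow> complex" where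
  "mtrace A = (\<Sum>i<dim_row A. A $$ (i,i))"

definition adj :: "complex mat \<Rightarrow> complex mat" where
  "adj A = mat (dim_col A) (dim_row A) (\<lambda>(i,j). cnj (A $$ (j,i)))"

definition unitary_mat :: "nat \<Rightarrow> complex mat \<Rightarrow> bool" where
  "unitary_mat d U \<longleftrightarrow> U \<in> carrier_mat d d \<and> adj U * U = 1\<^sub>m d \<and> U * adj U = 1\<^sub>m d"

definition H2 :: "nat \<Rightarrow> nat \<Rightarrow> complex mat \<Rightarrow> real" where
  "H2 dL n U = 1 - (1 / real (dL ^ n) ^ 6) *
     (\<Sum>a\<in>Idx dL n. \<Sum>b\<in>Idx dL n.
        cmod (mtrace (adj (Dn dL a) * U * Dn dL b * adj U)) ^ 4)"

definition frob_norm :: "complex mat \<Rightarrow> real" where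
  "frob_norm A = sqrt (Re (mtrace (adj A * A)))"

end

theory Submission
  imports Defs "HOL-Analysis.L2_Norm"
begin

lemma cmod_omega[simp]: "cmod (omega N) = 1"
  by (simp add: omega_def)
lemma cmod_tau[simp]: "cmod (tau N) = 1"
  by (simp add: tau_def)
lemma omega_pow_N: "N > 0 \<Longrightarrow> omega N ^ N = 1"
  by (simp add: omega_def DeMoivre)

lemma cnj_mult_self_unit: "cmod z = 1 \<Longrightarrow> cnj z * z = 1"
  by (metis complex_mod_mult_cnj complex_norm_square mult.commute of_real_1 power_one)

lemma omega_ne:
  assumes "j < N" "l < N" "j \<noteq> l"
  shows "cnj (omega N ^ j) * omega N ^ l \<noteq> 1"
proof
  assume h: "cnj (omega N ^ j) * omega N ^ l = 1"
  have N: "N > 0" using assms by auto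
  have "cnj (omega N ^ j) * omega N ^ l = cis (2 * pi * (real l - real j) / real N)"
    by (simp add: omega_def DeMoivre cis_cnj cis_mult algebra_simps diff_divide_distrib)
  then have "cos (2 * pi * (real l - real j) / real N) = 1" using h
    by (metis Re_complex_of_real cis.sel(1) of_real_1)
  then obtain m :: int where m: "2 * pi * (real l - real j) / real N = real_of_int m * 2 * pi"
    using cos_one_2pi_int by blast
  then have "2 * pi * ((real l - real j) - real_of_int m * real N) = 0" using N
    by (simp add: field_simps)
  then have "real l - real j = real_of_int m * real N" by simp
  then have "int l - int j = m * int N"
    by (metis of_int_eq_iff of_int_mult of_int_of_nat_eq of_int_diff)
  note e = this
  have c1: "\<not> m \<ge> 1"
  proof
    assume "m \<ge> 1"
    then have "m * int N \<ge> int N" using mult_right_mono[of 1 m "int N"] by simp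
    then show False using e assms by linarith
  qed
  have c2: "\<not> m \<le> -1"
  proof
    assume "m \<le> -1"
    then have "m * int N \<le> - int N" using mult_right_mono[of m "-1" "int N"] by simp
    then show False using e assms by linarith
  qed
  have "m = 0" using c1 c2 by linarith
  then show False using e assms by simp
qed

lemma omega_sum:
  assumes "j < N" "l < N"
  shows "(\<Sum>a<N. (cnj (omega N ^ j) * omega N ^ l) ^ a) = (if j = l then of_nat N else 0)"
proof (cases "j = l")
  case True
  then show ?thesis using cnj_mult_self_unit[of "omega N ^ j"] by (simp add: norm_power)
next
  case False
  have N: "N > 0" using assms by auto
  have "(cnj (omega N ^ j) * omega N ^ l) ^ N = 1"
  proof -
    have "(cnj (omega N ^ j) * omega N ^ l) ^ N = cnj ((omega N ^ N) ^ j) * (omega N ^ N) ^ l"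
      by (simp add: power_mult_distrib flip: power_mult complex_cnj_power) (simp add: mult.commute)
    then show ?thesis by (simp add: omega_pow_N[OF N])
  qed
  then show ?thesis using omega_ne[OF assms False] False by (simp add: sum_gp_strict)
qed

lemma mult_entry:
  assumes "A \<in> carrier_mat a b" "B \<in> carrier_mat b c" "i < a" "j < c"
  shows "(A * B) $$ (i,j) = (\<Sum>k<b. A $$ (i,k) * B $$ (k,j))"
  using assms by (auto simp: scalar_prod_def atLeast0LessThan intro!: sum.cong)

lemma Xmat_carrier[simp]: "Xmat N \<in> carrier_mat N N" by (simp add: Xmat_def)
lemma Zmat_carrier[simp]: "Zmat N \<in> carrier_mat N N" by (simp add: Zmat_def)
lemma Xmat_dim[simp]: "dim_row (Xmat N) = N" "dim_col (Xmat N) = N" by (simp_all add: Xmat_def)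
lemma Zmat_dim[simp]: "dim_row (Zmat N) = N" "dim_col (Zmat N) = N" by (simp_all add: Zmat_def)

lemma Xpow_entry:
  assumes "i < N" "j < N"
  shows "(Xmat N ^\<^sub>m m) $$ (i,j) = (if i = (j + m) mod N then 1 else 0)"
  using assms
proof (induction m arbitrary: i j)
  case 0
  then show ?case by simp
next
  case (Suc m)
  have "(Xmat N ^\<^sub>m Suc m) $$ (i,j) = (\<Sum>k<N. (Xmat N ^\<^sub>m m) $$ (i,k) * Xmat N $$ (k,j))"
    unfolding pow_mat.simps(2) using Suc.prems by (intro mult_entry[of _ N N _ N]) auto
  also have "\<dots> = (\<Sum>k<N. if k = (j+1) mod N then (if i = (k + m) mod N then 1 else 0) else 0)"
    using Suc by (intro sum.cong) (auto simp: Xmat_def)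
  also have "\<dots> = (if i = ((j+1) mod N + m) mod N then 1 else 0)"
    using Suc.prems by (simp add: sum.delta)
  also have "((j+1) mod N + m) mod N = (j + Suc m) mod N"
    using mod_add_left_eq[of "j+1" N m] by simp
  finally show ?case .
qed

lemma Zpow_entry:
  assumes "i < N" "j < N"
  shows "(Zmat N ^\<^sub>m m) $$ (i,j) = (if i = j then omega N ^ (m * j) else 0)"
  using assms
proof (induction m arbitrary: i j)
  case 0
  then show ?case by simp
next
  case (Suc m)
  have "(Zmat N ^\<^sub>m Suc m) $$ (i,j) = (\<Sum>k<N. (Zmat N ^\<^sub>m m) $$ (i,k) * Zmat N $$ (k,j))"
    unfolding pow_mat.simps(2) using Suc.prems by (intro mult_entry[of _ N N _ N]) auto
  also have "\<dots> = (\<Sum>k<N. if k = j then (if i = j then omega N ^ (m * j) * omega N ^ j else 0) else 0)"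
    using Suc by (intro sum.cong) (auto simp: Zmat_def)
  also have "\<dots> = (if i = j then omega N ^ (Suc m * j) else 0)"
    using Suc.prems by (simp add: sum.delta power_add)
  finally show ?case .
qed

lemma Dq_dim[simp]: "dim_row (Dq N p) = N" "dim_col (Dq N p) = N"
  by (simp_all add: Dq_def)
lemma Dq_carrier[simp]: "Dq N p \<in> carrier_mat N N"
  by (rule carrier_matI) simp_all

lemma Dq_entry:
  assumes "i < N" "j < N"
  shows "Dq N p $$ (i,j) = (if i = (j + fst p) mod N then tau N ^ (fst p * snd p) * omega N ^ (snd p * j) else 0)"
proof -
  have "(Xmat N ^\<^sub>m fst p * Zmat N ^\<^sub>m snd p) $$ (i,j) =
     (\<Sum>k<N. (Xmat N ^\<^sub>m fst p) $$ (i,k) * (Zmat N ^\<^sub>m snd p) $$ (k,j))"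
    using assms by (intro mult_entry[of _ N N _ N]) auto
  also have "\<dots> = (\<Sum>k<N. if k = j then (if i = (j + fst p) mod N then omega N ^ (snd p * j) else 0) else 0)"
    using assms by (intro sum.cong) (auto simp: Xpow_entry Zpow_entry)
  also have "\<dots> = (if i = (j + fst p) mod N then omega N ^ (snd p * j) else 0)"
    using assms by (simp add: sum.delta)
  finally have e: "(Xmat N ^\<^sub>m fst p * Zmat N ^\<^sub>m snd p) $$ (i,j) =
     (if i = (j + fst p) mod N then omega N ^ (snd p * j) else 0)" .
  have "Dq N p $$ (i,j) = tau N ^ (fst p * snd p) * (Xmat N ^\<^sub>m fst p * Zmat N ^\<^sub>m snd p) $$ (i,j)"
    unfolding Dq_def using assms by (intro index_smult_mat(1)) auto
  then show ?thesis unfolding e by simp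
qed

lemma mod_shift_iff:
  fixes i j a N :: nat
  assumes "i < N" "j < N" "a < N"
  shows "(i = (j + a) mod N) = (a = (i + (N - j)) mod N)"
proof
  assume h: "i = (j + a) mod N"
  have "(i + (N - j)) mod N = ((j + a) mod N + (N - j)) mod N" using h by simp
  also have "\<dots> = (j + a + (N - j)) mod N" by (metis mod_add_left_eq)
  also have "j + a + (N - j) = a + N" using assms by simp
  also have "(a + N) mod N = a" using assms by simp
  finally show "a = (i + (N - j)) mod N" by simp
next
  assume h: "a = (i + (N - j)) mod N"
  have "(j + a) mod N = (j + (i + (N - j)) mod N) mod N" using h by simp
  also have "\<dots> = (j + (i + (N - j))) mod N" by (metis mod_add_right_eq)
  also have "j + (i + (N - j)) = i + N" using assms by simp
  also have "(i + N) mod N = i" using assms by simp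
  finally show "i = (j + a) mod N" by simp
qed

lemma count_shift:
  fixes i j N :: nat
  assumes "i < N" "j < N"
  shows "(\<Sum>a<N. if i = (j + a) mod N then (1::complex) else 0) = 1"
proof -
  have "(\<Sum>a<N. if i = (j + a) mod N then (1::complex) else 0)
      = (\<Sum>a<N. if a = (i + (N - j)) mod N then 1 else 0)"
    using assms by (intro sum.cong) (auto simp: mod_shift_iff)
  also have "\<dots> = 1" using assms by (simp add: sum.delta)
  finally show ?thesis .
qed

lemma Dq_complete:
  assumes "i < N" "j < N" "k < N" "l < N"
  shows "(\<Sum>p\<in>{..<N} \<times> {..<N}. cnj (Dq N p $$ (i,j)) * Dq N p $$ (k,l))
       = (if i = k \<and> j = l then of_nat N else 0)"
proof -
  let ?z = "cnj (omega N ^ j) * omega N ^ l"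
  have t: "cnj (Dq N (a,b) $$ (i,j)) * Dq N (a,b) $$ (k,l)
      = (if i = (j + a) mod N \<and> k = (l + a) mod N then ?z ^ b else 0)" for a b
  proof -
    have "cnj (tau N ^ (a*b)) * tau N ^ (a*b) = 1"
      by (rule cnj_mult_self_unit) (simp add: norm_power)
    moreover have "cnj (omega N ^ (b * j)) * omega N ^ (b * l) = ?z ^ b"
      by (simp add: power_mult_distrib mult.commute[of b] power_mult flip: complex_cnj_power)
    ultimately show ?thesis using assms
      by (simp add: Dq_entry) (metis (no_types, lifting) mult.assoc mult.commute mult.left_commute mult_1)
  qed
  have "(\<Sum>p\<in>{..<N} \<times> {..<N}. cnj (Dq N p $$ (i,j)) * Dq N p $$ (k,l))
      = (\<Sum>a<N. \<Sum>b<N. cnj (Dq N (a,b) $$ (i,j)) * Dq N (a,b) $$ (k,l))"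
    by (simp add: sum.cartesian_product)
  also have "\<dots> = (\<Sum>a<N. if i = (j + a) mod N \<and> k = (l + a) mod N then (\<Sum>b<N. ?z ^ b) else 0)"
    by (intro sum.cong refl) (auto simp: t)
  also have "\<dots> = (\<Sum>a<N. if i = (j + a) mod N \<and> k = (l + a) mod N then (if j = l then of_nat N else 0) else 0)"
    by (simp only: omega_sum[OF assms(2,4)])
  also have "\<dots> = (if i = k \<and> j = l then of_nat N else 0)"
  proof (cases "i = k \<and> j = l")
    case True
    then have "(\<Sum>a<N. if i = (j + a) mod N \<and> k = (l + a) mod N then (if j = l then of_nat N else 0) else 0)
       = of_nat N * (\<Sum>a<N. if i = (j + a) mod N then (1::complex) else 0)"
      by (simp add: sum_distrib_left if_distrib cong: if_cong)
    then show ?thesis using True count_shift[OF assms(1,2)] by simp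
  next
    case False
    then show ?thesis by (auto intro!: sum.neutral)
  qed
  finally show ?thesis .
qed

lemma sum_split:
  fixes m k :: nat
  shows "(\<Sum>t<m*k. f t) = (\<Sum>t1<m. \<Sum>t2<k. f (t1*k + t2))"
proof -
  have "(\<Sum>t<m*k. f t) = (\<Sum>t1<m. sum f {t1*k..<t1*k+k})"
    by (rule sum.nat_group[symmetric])
  also have "\<dots> = (\<Sum>t1<m. \<Sum>t2<k. f (t1*k + t2))"
  proof (rule sum.cong[OF refl])
    fix t1 assume "t1 \<in> {..<m}"
    show "sum f {t1*k..<t1*k+k} = (\<Sum>t2<k. f (t1*k + t2))"
      using sum.shift_bounds_nat_ivl[of f 0 "t1*k" k]
      by (simp add: atLeast0LessThan add.commute)
  qed
  finally show ?thesis .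
qed

lemma adj_dim[simp]: "dim_row (adj A) = dim_col A" "dim_col (adj A) = dim_row A"
  by (simp_all add: adj_def)

lemma adj_entry[simp]: "i < dim_col A \<Longrightarrow> j < dim_row A \<Longrightarrow> adj A $$ (i,j) = cnj (A $$ (j,i))"
  by (simp add: adj_def)

lemma adj_carrier[simp]: "A \<in> carrier_mat a b \<Longrightarrow> adj A \<in> carrier_mat b a"
  by (rule carrier_matI) (auto dest: carrier_matD)

lemma kron_dim[simp]: "dim_row (kron A B) = dim_row A * dim_row B" "dim_col (kron A B) = dim_col A * dim_col B"
  by (simp_all add: kron_def)

lemma kron_carrier: "A \<in> carrier_mat a b \<Longrightarrow> B \<in> carrier_mat c e \<Longrightarrow> kron A B \<in> carrier_mat (a*c) (b*e)"
  by (rule carrier_matI) (auto dest: carrier_matD)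

lemma kron_entry:
  "i < dim_row A * dim_row B \<Longrightarrow> j < dim_col A * dim_col B \<Longrightarrow>
   kron A B $$ (i,j) = A $$ (i div dim_row B, j div dim_col B) * B $$ (i mod dim_row B, j mod dim_col B)"
  by (simp add: kron_def)

lemma div_less_of_mult: "(i::nat) < m * k \<Longrightarrow> i div k < m"
  by (simp add: less_mult_imp_div_less)

lemma mod_less_of_mult: "(i::nat) < m * k \<Longrightarrow> i mod k < k"
  by (metis mod_less_divisor mult_0_right not_less_zero gr0I)

lemma kron_mult:
  assumes A: "A \<in> carrier_mat m m" and B: "B \<in> carrier_mat k k"
    and C: "C \<in> carrier_mat m m" and D: "D \<in> carrier_mat k k"
  shows "kron A B * kron C D = kron (A * C) (B * D)"
proof (rule eq_matI)
  show "dim_row (kron A B * kron C D) = dim_row (kron (A * C) (B * D))"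
    "dim_col (kron A B * kron C D) = dim_col (kron (A * C) (B * D))"
    using assms by auto
  fix i j assume "i < dim_row (kron (A * C) (B * D))" "j < dim_col (kron (A * C) (B * D))"
  then have i: "i < m * k" and j: "j < m * k" using assms by auto
  have "(kron A B * kron C D) $$ (i,j) = (\<Sum>t<m*k. kron A B $$ (i,t) * kron C D $$ (t,j))"
    using i j by (intro mult_entry[of _ "m*k" "m*k" _ "m*k"] kron_carrier assms)
  also have "\<dots> = (\<Sum>t1<m. \<Sum>t2<k. kron A B $$ (i,t1*k+t2) * kron C D $$ (t1*k+t2,j))"
    by (rule sum_split)
  also have "\<dots> = (\<Sum>t1<m. \<Sum>t2<k. (A $$ (i div k, t1) * C $$ (t1, j div k)) * (B $$ (i mod k, t2) * D $$ (t2, j mod k)))"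
  proof (intro sum.cong refl)
    fix t1 t2 assume t1: "t1 \<in> {..<m}" and t2: "t2 \<in> {..<k}"
    have lt: "t1 * k + t2 < m * k" using t1 t2
      by (metis lessThan_iff add_less_cancel_left less_le_trans mult_Suc mult_le_mono1 Suc_le_eq add.commute)
    have t2': "t2 < k" using t2 by simp
    have d: "(t1*k+t2) div k = t1" "(t1*k+t2) mod k = t2" using t2 by auto
    show "kron A B $$ (i,t1*k+t2) * kron C D $$ (t1*k+t2,j) = (A $$ (i div k, t1) * C $$ (t1, j div k)) * (B $$ (i mod k, t2) * D $$ (t2, j mod k))"
      using assms i j lt t2' by (simp add: kron_entry d)
  qed
  also have "\<dots> = (\<Sum>t1<m. A $$ (i div k, t1) * C $$ (t1, j div k)) * (\<Sum>t2<k. B $$ (i mod k, t2) * D $$ (t2, j mod k))"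
    by (simp only: sum_product)
  also have "\<dots> = (A * C) $$ (i div k, j div k) * (B * D) $$ (i mod k, j mod k)"
    using mult_entry[OF A C div_less_of_mult[OF i] div_less_of_mult[OF j]]
      mult_entry[OF B D mod_less_of_mult[OF i] mod_less_of_mult[OF j]]
    by (simp only:)
  also have "\<dots> = kron (A * C) (B * D) $$ (i,j)"
    using assms i j by (simp add: kron_entry)
  finally show "(kron A B * kron C D) $$ (i,j) = kron (A * C) (B * D) $$ (i,j)" .
qed

lemma kron_adj: "adj (kron A B) = kron (adj A) (adj B)"
proof (rule eq_matI)
  fix i j assume "i < dim_row (kron (adj A) (adj B))" "j < dim_col (kron (adj A) (adj B))"
  then show "adj (kron A B) $$ (i,j) = kron (adj A) (adj B) $$ (i,j)"
    by (simp add: kron_entry div_less_of_mult mod_less_of_mult)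
qed auto

lemma kron_one: "kron (1\<^sub>m m) (1\<^sub>m k) = 1\<^sub>m (m * k)"
proof (rule eq_matI)
  fix i j assume "i < dim_row (1\<^sub>m (m * k))" "j < dim_col (1\<^sub>m (m * k))"
  then have i: "i < m * k" and j: "j < m*k" by auto
  have "(i div k = j div k \<and> i mod k = j mod k) = (i = j)"
    by (metis div_mult_mod_eq)
  then show "kron (1\<^sub>m m) (1\<^sub>m k) $$ (i,j) = 1\<^sub>m (m * k) $$ (i,j)"
    using i j by (auto simp add: kron_entry div_less_of_mult mod_less_of_mult)
qed auto

lemma adj_one[simp]: "adj (1\<^sub>m n) = 1\<^sub>m n"
  by (rule eq_matI) auto

lemma unitary_kron:
  assumes "unitary_mat m A" "unitary_mat k B"
  shows "unitary_mat (m*k) (kron A B)"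
proof -
  have A: "A \<in> carrier_mat m m" "adj A * A = 1\<^sub>m m" "A * adj A = 1\<^sub>m m"
    and B: "B \<in> carrier_mat k k" "adj B * B = 1\<^sub>m k" "B * adj B = 1\<^sub>m k"
    using assms unfolding unitary_mat_def by auto
  have "kron (adj A) (adj B) * kron A B = kron (adj A * A) (adj B * B)"
    using A B by (intro kron_mult) auto
  moreover have "kron A B * kron (adj A) (adj B) = kron (A * adj A) (B * adj B)"
    using A B by (intro kron_mult) auto
  moreover have "kron A B \<in> carrier_mat (m*k) (m*k)" by (rule kron_carrier[OF A(1) B(1)])
  ultimately show ?thesis unfolding unitary_mat_def kron_adj
    by (simp only: A(2,3) B(2,3) kron_one)
qed

lemma unitaryI:
  assumes D: "D \<in> carrier_mat N N"
    and c1: "\<And>j l. j < N \<Longrightarrow> l < N \<Longrightarrow> (\<Sum>i<N. cnj (D $$ (i,j)) * D $$ (i,l)) = (if j = l then 1 else 0)"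
    and c2: "\<And>i k. i < N \<Longrightarrow> k < N \<Longrightarrow> (\<Sum>j<N. D $$ (i,j) * cnj (D $$ (k,j))) = (if i = k then 1 else 0)"
  shows "unitary_mat N D"
proof -
  have dims: "dim_row D = N" "dim_col D = N" using D by auto
  have "adj D * D = 1\<^sub>m N"
  proof (rule eq_matI)
    fix j l assume "j < dim_row (1\<^sub>m N)" "l < dim_col (1\<^sub>m N)"
    then have j: "j < N" and l: "l < N" by auto
    have "(adj D * D) $$ (j,l) = (\<Sum>i<N. adj D $$ (j,i) * D $$ (i,l))"
      using j l D by (intro mult_entry[of _ N N _ N]) auto
    also have "\<dots> = (\<Sum>i<N. cnj (D $$ (i,j)) * D $$ (i,l))"
      using j dims by (intro sum.cong refl) auto
    also have "\<dots> = 1\<^sub>m N $$ (j,l)" using c1[OF j l] j l by simp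
    finally show "(adj D * D) $$ (j,l) = 1\<^sub>m N $$ (j,l)" .
  qed (use dims in auto)
  moreover have "D * adj D = 1\<^sub>m N"
  proof (rule eq_matI)
    fix i k assume "i < dim_row (1\<^sub>m N)" "k < dim_col (1\<^sub>m N)"
    then have i: "i < N" and k: "k < N" by auto
    have "(D * adj D) $$ (i,k) = (\<Sum>j<N. D $$ (i,j) * adj D $$ (j,k))"
      using i k D by (intro mult_entry[of _ N N _ N]) auto
    also have "\<dots> = (\<Sum>j<N. D $$ (i,j) * cnj (D $$ (k,j)))"
      using k dims by (intro sum.cong refl) auto
    also have "\<dots> = 1\<^sub>m N $$ (i,k)" using c2[OF i k] i k by simp
    finally show "(D * adj D) $$ (i,k) = 1\<^sub>m N $$ (i,k)" .
  qed (use dims in auto)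
  ultimately show ?thesis using D unfolding unitary_mat_def by simp
qed

lemma mod_inj:
  fixes j l a N :: nat
  assumes "j < N" "l < N" "(j + a) mod N = (l + a) mod N"
  shows "j = l"
proof -
  let ?a = "a mod N"
  have N: "N > 0" using assms by auto
  have a: "?a < N" using N by simp
  have e1: "(j + a) mod N = (?a + j) mod N" by (metis add.commute mod_add_left_eq)
  have e2: "(l + a) mod N = (?a + l) mod N" by (metis add.commute mod_add_left_eq)
  let ?i = "(?a + j) mod N"
  have i: "?i < N" using N by simp
  have "j = (?i + (N - ?a)) mod N" using mod_shift_iff[OF i a assms(1)] by simp
  moreover have "l = (?i + (N - ?a)) mod N" using mod_shift_iff[OF i a assms(2)] assms(3) e1 e2 by simp
  ultimately show ?thesis by simp
qed

lemma Dq_unitary: "unitary_mat N (Dq N p)"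
proof (rule unitaryI)
  show "Dq N p \<in> carrier_mat N N" by simp
  obtain a b where p: "p = (a,b)" by force
  let ?c = "\<lambda>j. tau N ^ (a * b) * omega N ^ (b * j)"
  have c: "cnj (?c j) * ?c j = 1" for j
    by (rule cnj_mult_self_unit) (simp add: norm_power norm_mult)
  have c': "?c j * cnj (?c j) = 1" for j using c[of j] by (simp add: mult.commute)
  fix j l assume j: "j < N" and l: "l < N"
  have "(\<Sum>i<N. cnj (Dq N p $$ (i,j)) * Dq N p $$ (i,l))
     = (\<Sum>i<N. if i = (j + a) mod N \<and> i = (l + a) mod N then cnj (?c j) * ?c l else 0)"
    using j l by (intro sum.cong refl) (auto simp: Dq_entry p)
  also have "\<dots> = (if j = l then 1 else 0)"
  proof (cases "j = l")
    case True
    then show ?thesis using j by (simp del: complex_cnj_mult complex_cnj_power add: c sum.delta)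
  next
    case False
    then have "(j + a) mod N \<noteq> (l + a) mod N" using mod_inj[OF j l] by blast
    then show ?thesis using False by (auto intro!: sum.neutral)
  qed
  finally show "(\<Sum>i<N. cnj (Dq N p $$ (i,j)) * Dq N p $$ (i,l)) = (if j = l then 1 else 0)" .
next
  obtain a b where p: "p = (a,b)" by force
  let ?c = "\<lambda>j. tau N ^ (a * b) * omega N ^ (b * j)"
  have c: "cnj (?c j) * ?c j = 1" for j
    by (rule cnj_mult_self_unit) (simp add: norm_power norm_mult)
  have c': "?c j * cnj (?c j) = 1" for j using c[of j] by (simp add: mult.commute)
  fix i k assume i: "i < N" and k: "k < N"
  have "(\<Sum>j<N. Dq N p $$ (i,j) * cnj (Dq N p $$ (k,j)))
     = (\<Sum>j<N. if i = (j + a) mod N \<and> k = (j + a) mod N then 1 else 0)"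
    using i k by (intro sum.cong refl) (auto simp del: complex_cnj_mult complex_cnj_power simp: Dq_entry p c')
  also have "\<dots> = (if i = k then 1 else 0)"
  proof (cases "i = k")
    case True
    have N: "N > 0" using i by auto
    have "(\<Sum>j<N. if i = (j + a) mod N \<and> k = (j + a) mod N then 1 else 0)
        = (\<Sum>j<N. if i = (a mod N + j) mod N then (1::complex) else 0)"
      using True by (intro sum.cong refl) (metis add.commute mod_add_left_eq)
    also have "\<dots> = 1" using count_shift[OF i, of "a mod N"] N by simp
    finally show ?thesis using True by simp
  next
    case False
    then show ?thesis by (auto intro!: sum.neutral)
  qed
  finally show "(\<Sum>j<N. Dq N p $$ (i,j) * cnj (Dq N p $$ (k,j))) = (if i = k then 1 else 0)" .
qed

lemma Dn_carrier: "Dn N ps \<in> carrier_mat (N ^ length ps) (N ^ length ps)"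
proof (induction ps)
  case Nil
  then show ?case by simp
next
  case (Cons p ps)
  then show ?case using kron_carrier[OF Dq_carrier[of N p] Cons.IH] by simp
qed

lemma unitary_one: "unitary_mat n (1\<^sub>m n)"
  unfolding unitary_mat_def by simp

lemma Dn_unitary: "unitary_mat (N ^ length ps) (Dn N ps)"
proof (induction ps)
  case Nil
  then show ?case using unitary_one[of 1] by simp
next
  case (Cons p ps)
  then show ?case using unitary_kron[OF Dq_unitary[of N p] Cons.IH] by simp
qed

lemma Idx_0: "Idx N 0 = {[]}"
  by (auto simp: Idx_def)

lemma Idx_Suc: "Idx N (Suc n) = (\<lambda>(p,ps). p # ps) ` (({..<N} \<times> {..<N}) \<times> Idx N n)"
  by (auto simp: Idx_def length_Suc_conv image_iff)

lemma inj_Cons_pair: "inj_on (\<lambda>(p,ps). p # ps) S"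
  by (auto simp: inj_on_def)

lemma finite_Idx: "finite (Idx N n)"
  by (induction n) (auto simp: Idx_0 Idx_Suc)

lemma card_Idx: "card (Idx N n) = (N ^ n)^2"
proof (induction n)
  case 0
  then show ?case by (simp add: Idx_0)
next
  case (Suc n)
  have "card (Idx N (Suc n)) = card (({..<N} \<times> {..<N}) \<times> Idx N n)"
    unfolding Idx_Suc by (rule card_image[OF inj_Cons_pair])
  also have "\<dots> = N * N * (N ^ n)^2" using Suc by (simp add: card_cartesian_product)
  finally show ?case by (simp add: power2_eq_square)
qed

lemma Idx_length: "a \<in> Idx N n \<Longrightarrow> length a = n"
  by (simp add: Idx_def)

lemma div_mod_eq_iff: "((i::nat) div M = k div M \<and> i mod M = k mod M) = (i = k)"
  by (metis div_mult_mod_eq)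

lemma Dn_dims[simp]: "dim_row (Dn N ps) = N ^ length ps" "dim_col (Dn N ps) = N ^ length ps"
  using Dn_carrier[of N ps] by auto

lemma Dn_complete:
  assumes "i < N^n" "j < N^n" "k < N^n" "l < N^n"
  shows "(\<Sum>a\<in>Idx N n. cnj (Dn N a $$ (i,j)) * Dn N a $$ (k,l)) = (if i = k \<and> j = l then of_nat (N^n) else 0)"
  using assms
proof (induction n arbitrary: i j k l)
  case 0
  then show ?case by (simp add: Idx_0)
next
  case (Suc n)
  let ?M = "N ^ n"
  let ?P = "{..<N} \<times> {..<N}"
  have i: "i < N * ?M" and j: "j < N * ?M" and k: "k < N * ?M" and l: "l < N * ?M" using Suc.prems by auto
  have F: "cnj (Dn N (p # ps) $$ (i,j)) * Dn N (p # ps) $$ (k,l)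
     = (cnj (Dq N p $$ (i div ?M, j div ?M)) * Dq N p $$ (k div ?M, l div ?M))
       * (cnj (Dn N ps $$ (i mod ?M, j mod ?M)) * Dn N ps $$ (k mod ?M, l mod ?M))"
    if "ps \<in> Idx N n" for p ps
  proof -
    have len: "length ps = n" using that by (simp add: Idx_length)
    show ?thesis using i j k l len by (simp add: kron_entry)
  qed
  have "(\<Sum>a\<in>Idx N (Suc n). cnj (Dn N a $$ (i,j)) * Dn N a $$ (k,l))
     = (\<Sum>x\<in>?P \<times> Idx N n. (\<lambda>a. cnj (Dn N a $$ (i,j)) * Dn N a $$ (k,l)) ((\<lambda>(p,ps). p # ps) x))"
    unfolding Idx_Suc by (simp only: sum.reindex[OF inj_Cons_pair] comp_def)
  also have "\<dots> = (\<Sum>p\<in>?P. \<Sum>ps\<in>Idx N n. cnj (Dn N (p # ps) $$ (i,j)) * Dn N (p # ps) $$ (k,l))"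
    by (simp add: sum.cartesian_product split_def)
  also have "\<dots> = (\<Sum>p\<in>?P. \<Sum>ps\<in>Idx N n. (cnj (Dq N p $$ (i div ?M, j div ?M)) * Dq N p $$ (k div ?M, l div ?M))
       * (cnj (Dn N ps $$ (i mod ?M, j mod ?M)) * Dn N ps $$ (k mod ?M, l mod ?M)))"
    by (intro sum.cong refl) (rule F)
  also have "\<dots> = (\<Sum>p\<in>?P. cnj (Dq N p $$ (i div ?M, j div ?M)) * Dq N p $$ (k div ?M, l div ?M))
       * (\<Sum>ps\<in>Idx N n. cnj (Dn N ps $$ (i mod ?M, j mod ?M)) * Dn N ps $$ (k mod ?M, l mod ?M))"
    by (simp only: sum_product)
  also have "\<dots> = (if i div ?M = k div ?M \<and> j div ?M = l div ?M then of_nat N else 0)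
       * (if i mod ?M = k mod ?M \<and> j mod ?M = l mod ?M then of_nat ?M else 0)"
    using Dq_complete[OF div_less_of_mult[OF i] div_less_of_mult[OF j] div_less_of_mult[OF k] div_less_of_mult[OF l]]
      Suc.IH[OF mod_less_of_mult[OF i] mod_less_of_mult[OF j] mod_less_of_mult[OF k] mod_less_of_mult[OF l]]
    by (simp only:)
  also have "\<dots> = (if i = k \<and> j = l then of_nat (N ^ Suc n) else 0)"
    using div_mod_eq_iff[of i ?M k] div_mod_eq_iff[of j ?M l] by auto
  finally show ?case .
qed

definition SS :: "nat \<Rightarrow> (nat \<times> nat) set" where "SS d = {..<d} \<times> {..<d}"

definition nrm2 :: "complex mat \<Rightarrow> real" where "nrm2 X = Re (mtrace (adj X * X))"

lemma finite_SS[simp]: "finite (SS d)" by (simp add: SS_def)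

lemma mtrace_adj_mult:
  assumes A: "A \<in> carrier_mat d d" and X: "X \<in> carrier_mat d d"
  shows "mtrace (adj A * X) = (\<Sum>q\<in>SS d. cnj (A $$ q) * X $$ q)"
proof -
  have "mtrace (adj A * X) = (\<Sum>i<d. (adj A * X) $$ (i,i))"
    using A by (simp add: mtrace_def)
  also have "\<dots> = (\<Sum>i<d. \<Sum>k<d. adj A $$ (i,k) * X $$ (k,i))"
    using A X by (intro sum.cong refl mult_entry[of _ d d _ d]) auto
  also have "\<dots> = (\<Sum>i<d. \<Sum>k<d. cnj (A $$ (k,i)) * X $$ (k,i))"
    using A by (intro sum.cong refl) auto
  also have "\<dots> = (\<Sum>k<d. \<Sum>i<d. cnj (A $$ (k,i)) * X $$ (k,i))"
    by (rule sum.swap)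
  also have "\<dots> = (\<Sum>q\<in>SS d. cnj (A $$ q) * X $$ q)"
    unfolding SS_def by (simp add: sum.cartesian_product)
  finally show ?thesis .
qed

lemma Re_cnj_mult_self: "Re (cnj z * z) = (cmod z)^2"
  by (metis Re_complex_of_real complex_norm_square mult.commute of_real_power)

lemma nrm2_sum:
  assumes X: "X \<in> carrier_mat d d"
  shows "nrm2 X = (\<Sum>q\<in>SS d. (cmod (X $$ q))^2)"
proof -
  have "nrm2 X = Re (\<Sum>q\<in>SS d. cnj (X $$ q) * X $$ q)"
    unfolding nrm2_def using mtrace_adj_mult[OF X X] by simp
  also have "\<dots> = (\<Sum>q\<in>SS d. Re (cnj (X $$ q) * X $$ q))" by (simp add: Re_sum)
  also have "\<dots> = (\<Sum>q\<in>SS d. (cmod (X $$ q))^2)"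
    by (intro sum.cong refl) (rule Re_cnj_mult_self)
  finally show ?thesis .
qed

lemma nrm2_nonneg: "X \<in> carrier_mat d d \<Longrightarrow> nrm2 X \<ge> 0"
  by (simp add: nrm2_sum sum_nonneg)

lemma frob_nrm2: "frob_norm X = sqrt (nrm2 X)"
  by (simp add: frob_norm_def nrm2_def)

lemma adj_mult:
  assumes A: "A \<in> carrier_mat a b" and B: "B \<in> carrier_mat b c"
  shows "adj (A * B) = adj B * adj A"
proof (rule eq_matI)
  fix i j assume "i < dim_row (adj B * adj A)" "j < dim_col (adj B * adj A)"
  then have i: "i < c" and j: "j < a" using A B by auto
  have "adj (A * B) $$ (i,j) = cnj ((A * B) $$ (j,i))" using A B i j by simp
  also have "\<dots> = cnj (\<Sum>k<b. A $$ (j,k) * B $$ (k,i))"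
    using A B i j by (simp add: mult_entry[OF A B j i])
  also have "\<dots> = (\<Sum>k<b. adj B $$ (i,k) * adj A $$ (k,j))"
    using A B i j by (simp add: mult.commute)
  also have "\<dots> = (adj B * adj A) $$ (i,j)"
    using A B i j by (intro mult_entry[symmetric, of _ c b _ a]) auto
  finally show "adj (A * B) $$ (i,j) = (adj B * adj A) $$ (i,j)" .
qed (use A B in auto)

lemma adj_adj[simp]: "adj (adj A) = A"
  by (rule eq_matI) auto

lemma mtrace_comm:
  assumes A: "A \<in> carrier_mat d d" and B: "B \<in> carrier_mat d d"
  shows "mtrace (A * B) = mtrace (B * A)"
proof -
  have "mtrace (A * B) = (\<Sum>i<d. (A * B) $$ (i,i))" using A by (simp add: mtrace_def)
  also have "\<dots> = (\<Sum>i<d. \<Sum>k<d. A $$ (i,k) * B $$ (k,i))"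
    by (intro sum.cong refl mult_entry[OF A B]) auto
  also have "\<dots> = (\<Sum>k<d. \<Sum>i<d. B $$ (k,i) * A $$ (i,k))"
    by (subst sum.swap) (simp add: mult.commute)
  also have "\<dots> = (\<Sum>k<d. (B * A) $$ (k,k))"
    by (intro sum.cong refl mult_entry[OF B A, symmetric]) auto
  also have "\<dots> = mtrace (B * A)" using B by (simp add: mtrace_def)
  finally show ?thesis .
qed

lemma nrm2_left:
  assumes W: "W \<in> carrier_mat d d" "adj W * W = 1\<^sub>m d" and A: "A \<in> carrier_mat d d"
  shows "nrm2 (W * A) = nrm2 A"
proof -
  have e: "adj W * (W * A) = A"
  proof -
    have "(adj W * W) * A = adj W * (W * A)" by (rule assoc_mult_mat) (use W A in auto)
    then show ?thesis using W A by simp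
  qed
  have "adj (W * A) * (W * A) = adj A * adj W * (W * A)"
    using adj_mult[OF W(1) A] by simp
  also have "\<dots> = adj A * (adj W * (W * A))"
    by (rule assoc_mult_mat) (use W A in auto)
  also have "\<dots> = adj A * A" using e by simp
  finally show ?thesis unfolding nrm2_def by simp
qed

lemma nrm2_adj:
  assumes A: "A \<in> carrier_mat d d"
  shows "nrm2 (adj A) = nrm2 A"
  unfolding nrm2_def using mtrace_comm[of A d "adj A"] A by simp

lemma nrm2_right:
  assumes W: "W \<in> carrier_mat d d" "W * adj W = 1\<^sub>m d" and A: "A \<in> carrier_mat d d"
  shows "nrm2 (A * W) = nrm2 A"
proof -
  have "adj (A * W) = adj W * adj A" by (rule adj_mult[OF A W(1)])
  then have "nrm2 (A * W) = nrm2 (adj W * adj A)" using nrm2_adj[of "A * W" d] A W by simp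
  also have "\<dots> = nrm2 (adj A)"
    by (rule nrm2_left) (use W A in auto)
  also have "\<dots> = nrm2 A" by (rule nrm2_adj[OF A])
  finally show ?thesis .
qed

lemma nrm2_unitary:
  assumes "unitary_mat d W"
  shows "nrm2 W = real d"
proof -
  have "adj W * W = 1\<^sub>m d" using assms unfolding unitary_mat_def by simp
  then show ?thesis unfolding nrm2_def mtrace_def by simp
qed

lemma sqrt_nrm2_triangle:
  assumes A: "A \<in> carrier_mat d d" and B: "B \<in> carrier_mat d d"
  shows "sqrt (nrm2 (A + B)) \<le> sqrt (nrm2 A) + sqrt (nrm2 B)"
proof -
  have AB: "A + B \<in> carrier_mat d d" using A B by simp
  have "sqrt (nrm2 (A + B)) = L2_set (\<lambda>q. cmod ((A + B) $$ q)) (SS d)"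
    unfolding L2_set_def nrm2_sum[OF AB] by simp
  also have "\<dots> \<le> L2_set (\<lambda>q. cmod (A $$ q) + cmod (B $$ q)) (SS d)"
  proof (rule L2_set_mono)
    fix q assume "q \<in> SS d"
    then have "fst q < d" "snd q < d" by (auto simp: SS_def)
    then show "cmod ((A + B) $$ q) \<le> cmod (A $$ q) + cmod (B $$ q)"
      using A B by (cases q) (simp add: norm_triangle_ineq)
  qed simp
  also have "\<dots> \<le> L2_set (\<lambda>q. cmod (A $$ q)) (SS d) + L2_set (\<lambda>q. cmod (B $$ q)) (SS d)"
    by (rule L2_set_triangle_ineq)
  also have "\<dots> = sqrt (nrm2 A) + sqrt (nrm2 B)"
    unfolding L2_set_def nrm2_sum[OF A] nrm2_sum[OF B] by simp
  finally show ?thesis .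
qed

lemma Dn_complete_pair:
  assumes "r \<in> SS (N^n)" "q \<in> SS (N^n)"
  shows "(\<Sum>a\<in>Idx N n. cnj (Dn N a $$ r) * Dn N a $$ q) = (if r = q then of_nat (N^n) else 0)"
proof -
  obtain r1 r2 q1 q2 where rq: "r = (r1,r2)" "q = (q1,q2)" by force
  show ?thesis using assms Dn_complete[of r1 N n r2 q1 q2] unfolding rq SS_def by auto
qed

lemma parseval:
  assumes X: "X \<in> carrier_mat (N^n) (N^n)"
  shows "(\<Sum>a\<in>Idx N n. (cmod (mtrace (adj (Dn N a) * X)))^2) = real (N^n) * nrm2 X"
proof -
  let ?d = "N^n"
  let ?I = "Idx N n"
  let ?S = "SS ?d"
  let ?T = "\<lambda>a. (\<Sum>q\<in>?S. cnj (Dn N a $$ q) * X $$ q)"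
  have T: "mtrace (adj (Dn N a) * X) = ?T a" if "a \<in> ?I" for a
    using that Dn_carrier[of N a] by (intro mtrace_adj_mult X) (simp add: Idx_length)
  have "(\<Sum>a\<in>?I. (cmod (mtrace (adj (Dn N a) * X)))^2) = (\<Sum>a\<in>?I. Re (cnj (?T a) * ?T a))"
  proof (intro sum.cong refl)
    fix a assume a: "a \<in> ?I"
    show "(cmod (mtrace (adj (Dn N a) * X)))^2 = Re (cnj (?T a) * ?T a)"
      by (simp only: T[OF a] Re_cnj_mult_self)
  qed
  also have "\<dots> = Re (\<Sum>a\<in>?I. cnj (?T a) * ?T a)" by (simp add: Re_sum)
  also have "(\<Sum>a\<in>?I. cnj (?T a) * ?T a) = (\<Sum>a\<in>?I. \<Sum>q\<in>?S. \<Sum>r\<in>?S. (cnj (X $$ q) * X $$ r) * (cnj (Dn N a $$ r) * Dn N a $$ q))"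
    by (intro sum.cong refl) (simp add: cnj_sum sum_product mult_ac, rule sum.swap)
  also have "\<dots> = (\<Sum>q\<in>?S. \<Sum>a\<in>?I. \<Sum>r\<in>?S. (cnj (X $$ q) * X $$ r) * (cnj (Dn N a $$ r) * Dn N a $$ q))"
    by (rule sum.swap)
  also have "\<dots> = (\<Sum>q\<in>?S. \<Sum>r\<in>?S. \<Sum>a\<in>?I. (cnj (X $$ q) * X $$ r) * (cnj (Dn N a $$ r) * Dn N a $$ q))"
    by (intro sum.cong refl sum.swap)
  also have "\<dots> = (\<Sum>q\<in>?S. \<Sum>r\<in>?S. (cnj (X $$ q) * X $$ r) * (\<Sum>a\<in>?I. cnj (Dn N a $$ r) * Dn N a $$ q))"
    by (simp add: sum_distrib_left)
  also have "\<dots> = (\<Sum>q\<in>?S. \<Sum>r\<in>?S. (cnj (X $$ q) * X $$ r) * (if r = q then of_nat ?d else 0))"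
    by (intro sum.cong refl) (simp add: Dn_complete_pair)
  also have "\<dots> = (\<Sum>q\<in>?S. of_nat ?d * (cnj (X $$ q) * X $$ q))"
    by (intro sum.cong refl) (simp add: if_distrib mult.commute cong: if_cong)
  finally have "(\<Sum>a\<in>?I. (cmod (mtrace (adj (Dn N a) * X)))^2) = Re (\<Sum>q\<in>?S. of_nat ?d * (cnj (X $$ q) * X $$ q))" .
  also have "\<dots> = real ?d * (\<Sum>q\<in>?S. Re (cnj (X $$ q) * X $$ q))"
    by (simp add: Re_sum sum_distrib_left)
  also have "\<dots> = real ?d * nrm2 X"
    by (simp only: nrm2_sum[OF X] Re_cnj_mult_self)
  finally show ?thesis .
qed

lemma quartic_bound:
  fixes x y z :: "'a \<Rightarrow> real"
  assumes fin: "finite I"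
    and x0: "\<And>a. a \<in> I \<Longrightarrow> x a \<ge> 0" and y0: "\<And>a. a \<in> I \<Longrightarrow> y a \<ge> 0"
    and sx: "(\<Sum>a\<in>I. (x a)^2) = s" and sy: "(\<Sum>a\<in>I. (y a)^2) = s"
    and z: "\<And>a. a \<in> I \<Longrightarrow> \<bar>x a - y a\<bar> \<le> z a"
    and ze: "L2_set z I \<le> e"
  shows "\<bar>\<Sum>a\<in>I. (x a)^4 - (y a)^4\<bar> \<le> 4 * s * sqrt s * e"
proof -
  have s0: "s \<ge> 0" using sx by (metis sum_nonneg zero_le_power2)
  have xs: "(x a)^2 \<le> s" if "a \<in> I" for a
    using member_le_sum[of a I "\<lambda>a. (x a)^2", OF that] fin sx by simp
  have ys: "(y a)^2 \<le> s" if "a \<in> I" for a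
    using member_le_sum[of a I "\<lambda>a. (y a)^2", OF that] fin sy by simp
  have pt: "\<bar>(x a)^4 - (y a)^4\<bar> \<le> 2 * s * (\<bar>z a\<bar> * \<bar>x a + y a\<bar>)" if a: "a \<in> I" for a
  proof -
    have e: "(x a)^4 - (y a)^4 = (x a - y a) * ((x a + y a) * ((x a)^2 + (y a)^2))"
      by (simp add: algebra_simps power2_eq_square power4_eq_xxxx)
    have n: "(x a + y a) * ((x a)^2 + (y a)^2) \<ge> 0" using x0[OF a] y0[OF a] by simp
    have "\<bar>(x a)^4 - (y a)^4\<bar> = \<bar>x a - y a\<bar> * ((x a + y a) * ((x a)^2 + (y a)^2))"
      unfolding e using n by (simp only: abs_mult[of "x a - y a"] abs_of_nonneg)
    also have "\<dots> \<le> z a * ((x a + y a) * (2 * s))"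
      using z[OF a] xs[OF a] ys[OF a] x0[OF a] y0[OF a]
      by (intro mult_mono) (auto intro!: mult_left_mono)
    also have "\<dots> = 2 * s * (\<bar>z a\<bar> * \<bar>x a + y a\<bar>)"
      using z[OF a] x0[OF a] y0[OF a] by (simp add: abs_of_nonneg[of "z a"] order_trans[OF abs_ge_zero])
    finally show ?thesis .
  qed
  have "\<bar>\<Sum>a\<in>I. (x a)^4 - (y a)^4\<bar> \<le> (\<Sum>a\<in>I. \<bar>(x a)^4 - (y a)^4\<bar>)" by (rule sum_abs)
  also have "\<dots> \<le> (\<Sum>a\<in>I. 2 * s * (\<bar>z a\<bar> * \<bar>x a + y a\<bar>))" by (intro sum_mono pt)
  also have "\<dots> = 2 * s * (\<Sum>a\<in>I. \<bar>z a\<bar> * \<bar>x a + y a\<bar>)" by (simp add: sum_distrib_left)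
  also have "\<dots> \<le> 2 * s * (L2_set z I * L2_set (\<lambda>a. x a + y a) I)"
    using s0 by (intro mult_left_mono L2_set_mult_ineq) auto
  also have "\<dots> \<le> 2 * s * (e * (2 * sqrt s))"
  proof -
    have "L2_set (\<lambda>a. x a + y a) I \<le> L2_set x I + L2_set y I" by (rule L2_set_triangle_ineq)
    also have "\<dots> = 2 * sqrt s" unfolding L2_set_def sx sy by simp
    finally have h: "L2_set (\<lambda>a. x a + y a) I \<le> 2 * sqrt s" .
    have l1: "0 \<le> L2_set z I" by (rule L2_set_nonneg)
    have l2: "0 \<le> L2_set (\<lambda>a. x a + y a) I" by (rule L2_set_nonneg)
    have e0: "0 \<le> e" using l1 ze by linarith
    show ?thesis using s0 ze h l1 l2 e0
      by (intro mult_left_mono mult_mono) auto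
  qed
  also have "\<dots> = 4 * s * sqrt s * e" by simp
  finally show ?thesis .
qed

lemma adj_minus:
  assumes "A \<in> carrier_mat d d" "B \<in> carrier_mat d d"
  shows "adj (A - B) = adj A - adj B"
  by (rule eq_matI) (use assms in auto)

lemma mtrace_minus:
  assumes A: "A \<in> carrier_mat d d" and X: "X \<in> carrier_mat d d" and Y: "Y \<in> carrier_mat d d"
  shows "mtrace (adj A * (X - Y)) = mtrace (adj A * X) - mtrace (adj A * Y)"
proof -
  have XY: "X - Y \<in> carrier_mat d d" using Y by (rule minus_carrier_mat)
  have "mtrace (adj A * (X - Y)) = (\<Sum>q\<in>SS d. cnj (A $$ q) * (X - Y) $$ q)"
    by (rule mtrace_adj_mult[OF A XY])
  also have "\<dots> = (\<Sum>q\<in>SS d. cnj (A $$ q) * X $$ q - cnj (A $$ q) * Y $$ q)"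
  proof (intro sum.cong refl)
    fix q assume "q \<in> SS d"
    then have "fst q < d" "snd q < d" by (auto simp: SS_def)
    then show "cnj (A $$ q) * (X - Y) $$ q = cnj (A $$ q) * X $$ q - cnj (A $$ q) * Y $$ q"
      using X Y by (cases q) (simp add: algebra_simps)
  qed
  also have "\<dots> = mtrace (adj A * X) - mtrace (adj A * Y)"
    by (simp add: sum_subtractf mtrace_adj_mult[OF A X] mtrace_adj_mult[OF A Y])
  finally show ?thesis .
qed

lemma telescope:
  assumes P: "(P :: complex mat) \<in> carrier_mat d d" and Q: "Q \<in> carrier_mat d d" and R: "R \<in> carrier_mat d d"
  shows "P - R = (P - Q) + (Q - R)"
proof -
  have d: "dim_row P = d" "dim_col P = d" "dim_row Q = d" "dim_col Q = d" "dim_row R = d" "dim_col R = d"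
    using P Q R by auto
  show ?thesis by (rule eq_matI) (simp_all add: d)
qed

lemma nrm2_conj:
  assumes U: "unitary_mat d U" and G: "unitary_mat d G"
  shows "nrm2 (U * G * adj U) = real d"
proof -
  have Uc: "U \<in> carrier_mat d d" "adj U * U = 1\<^sub>m d" "U * adj U = 1\<^sub>m d" using U unfolding unitary_mat_def by auto
  have Gc: "G \<in> carrier_mat d d" using G unfolding unitary_mat_def by auto
  have "nrm2 (U * G * adj U) = nrm2 (U * G)"
    by (rule nrm2_right) (use Uc Gc in auto)
  also have "\<dots> = nrm2 G" by (rule nrm2_left) (use Uc Gc in auto)
  also have "\<dots> = real d" by (rule nrm2_unitary[OF G])
  finally show ?thesis .
qed

lemma nrm2_diff:
  assumes U: "unitary_mat d U" and V: "unitary_mat d V" and G: "unitary_mat d G"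
  shows "sqrt (nrm2 (U * G * adj U - V * G * adj V)) \<le> 2 * sqrt (nrm2 (U - V))"
proof -
  have Uc: "U \<in> carrier_mat d d" "adj U * U = 1\<^sub>m d" "U * adj U = 1\<^sub>m d" using U unfolding unitary_mat_def by auto
  have Vc: "V \<in> carrier_mat d d" "adj V * V = 1\<^sub>m d" "V * adj V = 1\<^sub>m d" using V unfolding unitary_mat_def by auto
  have Gc: "G \<in> carrier_mat d d" "adj G * G = 1\<^sub>m d" "G * adj G = 1\<^sub>m d" using G unfolding unitary_mat_def by auto
  define W1 where "W1 = (U - V) * G * adj U"
  define W2 where "W2 = V * G * adj (U - V)"
  have UV: "U - V \<in> carrier_mat d d" using Vc(1) by (rule minus_carrier_mat)
  have aU: "adj U \<in> carrier_mat d d" using Uc(1) by (rule adj_carrier)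
  have W1c: "W1 \<in> carrier_mat d d" unfolding W1_def by (meson mult_carrier_mat adj_carrier UV Gc(1) Uc(1))
  have W2c: "W2 \<in> carrier_mat d d" unfolding W2_def by (meson mult_carrier_mat adj_carrier UV Gc(1) Vc(1))
  have e1: "W1 = U * G * adj U - V * G * adj U"
  proof -
    have "(U - V) * G = U * G - V * G" by (rule minus_mult_distrib_mat[OF Uc(1) Vc(1) Gc(1)])
    then have "W1 = (U * G - V * G) * adj U" unfolding W1_def by simp
    also have "\<dots> = U * G * adj U - V * G * adj U"
      by (rule minus_mult_distrib_mat[OF mult_carrier_mat[OF Uc(1) Gc(1)] mult_carrier_mat[OF Vc(1) Gc(1)] aU])
    finally show ?thesis .
  qed
  have e2: "W2 = V * G * adj U - V * G * adj V"
    unfolding W2_def adj_minus[OF Uc(1) Vc(1)]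
    by (rule mult_minus_distrib_mat[OF mult_carrier_mat[OF Vc(1) Gc(1)] aU adj_carrier[OF Vc(1)]])
  have sum: "U * G * adj U - V * G * adj V = W1 + W2"
  proof -
    have P: "U * G * adj U \<in> carrier_mat d d" and Q: "V * G * adj U \<in> carrier_mat d d"
      and R: "V * G * adj V \<in> carrier_mat d d" using Uc Vc Gc by auto
    show ?thesis unfolding e1 e2 by (rule telescope[OF P Q R])
  qed
  have aUV: "adj (U - V) \<in> carrier_mat d d" using UV by (rule adj_carrier)
  have UG: "(U - V) * G \<in> carrier_mat d d" by (rule mult_carrier_mat[OF UV Gc(1)])
  have GaUV: "G * adj (U - V) \<in> carrier_mat d d" by (rule mult_carrier_mat[OF Gc(1) aUV])
  have n1: "nrm2 W1 = nrm2 (U - V)"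
  proof -
    have "nrm2 W1 = nrm2 ((U - V) * G)" unfolding W1_def
      by (rule nrm2_right[OF aU _ UG]) (simp only: adj_adj Uc(2))
    also have "\<dots> = nrm2 (U - V)" by (rule nrm2_right[OF Gc(1) Gc(3) UV])
    finally show ?thesis .
  qed
  have n2: "nrm2 W2 = nrm2 (U - V)"
  proof -
    have "W2 = V * (G * adj (U - V))" unfolding W2_def
      by (rule assoc_mult_mat[OF Vc(1) Gc(1) aUV])
    then have "nrm2 W2 = nrm2 (G * adj (U - V))"
      using nrm2_left[OF Vc(1) Vc(2) GaUV] by simp
    also have "\<dots> = nrm2 (adj (U - V))" by (rule nrm2_left[OF Gc(1) Gc(2) aUV])
    also have "\<dots> = nrm2 (U - V)" by (rule nrm2_adj[OF UV])
    finally show ?thesis .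
  qed
  show ?thesis unfolding sum using sqrt_nrm2_triangle[OF W1c W2c] n1 n2 by simp
qed

lemma per_b:
  assumes U: "unitary_mat (N^n) U" and V: "unitary_mat (N^n) V" and b: "b \<in> Idx N n"
  shows "\<bar>\<Sum>a\<in>Idx N n. (cmod (mtrace (adj (Dn N a) * (U * Dn N b * adj U))))^4
              - (cmod (mtrace (adj (Dn N a) * (V * Dn N b * adj V))))^4\<bar>
         \<le> 4 * (real (N^n) * real (N^n)) * sqrt (real (N^n) * real (N^n))
             * (sqrt (real (N^n)) * (2 * frob_norm (U - V)))"
proof -
  let ?d = "N^n"
  let ?I = "Idx N n"
  let ?G = "Dn N b"
  let ?M = "U * ?G * adj U"
  let ?M' = "V * ?G * adj V"
  have Uc: "U \<in> carrier_mat ?d ?d" using U unfolding unitary_mat_def by auto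
  have Vc: "V \<in> carrier_mat ?d ?d" using V unfolding unitary_mat_def by auto
  have G: "unitary_mat ?d ?G" using Dn_unitary[of N b] b by (simp add: Idx_length)
  have Gc: "?G \<in> carrier_mat ?d ?d" using G unfolding unitary_mat_def by auto
  have Mc: "?M \<in> carrier_mat ?d ?d" using Uc Gc by auto
  have M'c: "?M' \<in> carrier_mat ?d ?d" using Vc Gc by auto
  have MM: "?M - ?M' \<in> carrier_mat ?d ?d" using M'c by (rule minus_carrier_mat)
  have Dc: "Dn N a \<in> carrier_mat ?d ?d" if "a \<in> ?I" for a
    using Dn_carrier[of N a] that by (simp add: Idx_length)
  define x where "x a = cmod (mtrace (adj (Dn N a) * ?M))" for a
  define y where "y a = cmod (mtrace (adj (Dn N a) * ?M'))" for a
  define z where "z a = cmod (mtrace (adj (Dn N a) * (?M - ?M')))" for a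
  have "\<bar>\<Sum>a\<in>?I. (x a)^4 - (y a)^4\<bar> \<le> 4 * (real ?d * real ?d) * sqrt (real ?d * real ?d)
             * (sqrt (real ?d) * (2 * frob_norm (U - V)))"
  proof (rule quartic_bound)
    show "finite ?I" by (rule finite_Idx)
    show "\<And>a. a \<in> ?I \<Longrightarrow> x a \<ge> 0" by (simp add: x_def)
    show "\<And>a. a \<in> ?I \<Longrightarrow> y a \<ge> 0" by (simp add: y_def)
    show "(\<Sum>a\<in>?I. (x a)^2) = real ?d * real ?d"
      unfolding x_def parseval[OF Mc] nrm2_conj[OF U G] by simp
    show "(\<Sum>a\<in>?I. (y a)^2) = real ?d * real ?d"
      unfolding y_def parseval[OF M'c] nrm2_conj[OF V G] by simp
    show "\<bar>x a - y a\<bar> \<le> z a" if a: "a \<in> ?I" for a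
      unfolding x_def y_def z_def mtrace_minus[OF Dc[OF a] Mc M'c] by (rule norm_triangle_ineq3)
    have "L2_set z ?I = sqrt (real ?d * nrm2 (?M - ?M'))"
      unfolding L2_set_def z_def parseval[OF MM] by simp
    also have "\<dots> = sqrt (real ?d) * sqrt (nrm2 (?M - ?M'))" by (simp add: real_sqrt_mult)
    also have "\<dots> \<le> sqrt (real ?d) * (2 * sqrt (nrm2 (U - V)))"
      by (intro mult_left_mono nrm2_diff[OF U V G]) simp
    finally show "L2_set z ?I \<le> sqrt (real ?d) * (2 * frob_norm (U - V))"
      by (simp add: frob_nrm2)
  qed
  then show ?thesis by (simp add: x_def y_def)
qed

lemma arith_final:
  fixes D F :: real
  assumes "D > 0"
  shows "1 / D ^ 6 * (D^2 * (4 * (D * D) * D * (sqrt D * (2 * F)))) = 8 * F / sqrt D"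
proof -
  have s: "sqrt D * sqrt D = D" using assms by simp
  have sd: "sqrt D > 0" using assms by simp
  have "1 / D ^ 6 * (D^2 * (4 * (D * D) * D * (sqrt D * (2 * F)))) = 8 * F * sqrt D / D"
    using assms by (simp add: field_simps power2_eq_square power_def eval_nat_numeral)
  also have "\<dots> = 8 * F / sqrt D"
    using sd s by (simp add: field_simps)
  finally show ?thesis .
qed

lemma assoc4:
  assumes "A \<in> carrier_mat d d" "B \<in> carrier_mat d d" "C \<in> carrier_mat d d" "E \<in> carrier_mat d d"
  shows "A * B * C * E = A * (B * C * E)"
proof -
  have "A * B * C = A * (B * C)" by (rule assoc_mult_mat) (use assms in auto)
  then have "A * B * C * E = A * (B * C) * E" by simp
  also have "\<dots> = A * (B * C * E)" by (rule assoc_mult_mat) (use assms in auto)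
  finally show ?thesis .
qed

theorem corollary2:
  fixes dL n :: nat and U V :: "complex mat"
  assumes "unitary_mat (dL ^ n) U" and "unitary_mat (dL ^ n) V"
  shows "\<bar>H2 dL n U - H2 dL n V\<bar> \<le> 4 * pi / sqrt (real (dL ^ n)) * frob_norm (U - V)"
proof -
  let ?d = "dL ^ n"
  let ?I = "Idx dL n"
  have finI: "finite ?I" by (rule finite_Idx)
  have cardI: "card ?I = ?d^2" by (rule card_Idx)
  show ?thesis
  proof (cases "?d = 0")
    case True
    then have "card ?I = 0" using cardI by (simp only: power2_eq_square mult_0)
    then have "?I = {}" using finI by simp
    moreover have r: "real (dL ^ n) = 0" using True by (simp only: of_nat_0)
    ultimately show ?thesis unfolding H2_def by (simp only: r) simp
  next
    case False
    then have d0: "real ?d > 0" by simp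
    have Uc: "U \<in> carrier_mat ?d ?d" using assms(1) unfolding unitary_mat_def by auto
    have Vc: "V \<in> carrier_mat ?d ?d" using assms(2) unfolding unitary_mat_def by auto
    have Dc: "Dn dL a \<in> carrier_mat ?d ?d" if "a \<in> ?I" for a
      using Dn_carrier[of dL a] that by (simp add: Idx_length)
    define F where "F = frob_norm (U - V)"
    have F0: "F \<ge> 0" unfolding F_def frob_nrm2
      using nrm2_nonneg[OF minus_carrier_mat[OF Vc, of U]] by simp
    define B where "B = 4 * (real ?d * real ?d) * sqrt (real ?d * real ?d) * (sqrt (real ?d) * (2 * F))"
    define f where "f W a b = (cmod (mtrace (adj (Dn dL a) * (W * Dn dL b * adj W))))^4" for W a b
    have HW: "H2 dL n W = 1 - (1 / real ?d ^ 6) * (\<Sum>b\<in>?I. \<Sum>a\<in>?I. f W a b)"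
      if Wc: "W \<in> carrier_mat ?d ?d" for W
    proof -
      have "(\<Sum>a\<in>?I. \<Sum>b\<in>?I. cmod (mtrace (adj (Dn dL a) * W * Dn dL b * adj W)) ^ 4)
          = (\<Sum>a\<in>?I. \<Sum>b\<in>?I. f W a b)"
        unfolding f_def
        by (intro sum.cong refl) (simp add: assoc4[OF adj_carrier[OF Dc] Wc Dc adj_carrier[OF Wc]])
      also have "\<dots> = (\<Sum>b\<in>?I. \<Sum>a\<in>?I. f W a b)" by (rule sum.swap)
      finally show ?thesis unfolding H2_def by simp
    qed
    define c where "c = 1 / real ?d ^ 6"
    have c0: "c > 0" using d0 by (simp add: c_def)
    define SU where "SU = (\<Sum>b\<in>?I. \<Sum>a\<in>?I. f U a b)"
    define SV where "SV = (\<Sum>b\<in>?I. \<Sum>a\<in>?I. f V a b)"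
    have "H2 dL n U - H2 dL n V = c * (SV - SU)"
      unfolding HW[OF Uc] HW[OF Vc] c_def SU_def SV_def by (simp add: algebra_simps)
    then have "\<bar>H2 dL n U - H2 dL n V\<bar> = c * \<bar>SU - SV\<bar>"
      using c0 by (simp add: abs_mult abs_minus_commute)
    also have "SU - SV = (\<Sum>b\<in>?I. \<Sum>a\<in>?I. f U a b - f V a b)"
      unfolding SU_def SV_def by (simp add: sum_subtractf)
    finally have "\<bar>H2 dL n U - H2 dL n V\<bar> = (1 / real ?d ^ 6) * \<bar>\<Sum>b\<in>?I. \<Sum>a\<in>?I. f U a b - f V a b\<bar>"
      by (simp add: c_def)
    also have "\<dots> \<le> (1 / real ?d ^ 6) * (\<Sum>b\<in>?I. \<bar>\<Sum>a\<in>?I. f U a b - f V a b\<bar>)"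
      using d0 by (intro mult_left_mono sum_abs) auto
    also have "\<dots> \<le> (1 / real ?d ^ 6) * (\<Sum>b\<in>?I. B)"
      using d0 unfolding f_def B_def F_def
      by (intro mult_left_mono sum_mono per_b assms) auto
    also have "\<dots> = (1 / real ?d ^ 6) * (real ?d ^ 2 * B)" using cardI by simp
    also have "\<dots> = 8 * F / sqrt (real ?d)"
    proof -
      have s: "sqrt (real ?d * real ?d) = real ?d" using d0 by simp
      show ?thesis unfolding B_def s by (rule arith_final[OF d0])
    qed
    also have "\<dots> \<le> 4 * pi / sqrt (real ?d) * F"
    proof -
      have "8 * F \<le> 4 * pi * F" using F0 pi_ge_two by (intro mult_right_mono) auto
      then show ?thesis using d0 by (simp add: divide_right_mono)
    qed
    finally show ?thesis by (simp add: F_def)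
  qed
qed

end
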